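(* Let $K, C_K\subset\mathbb{R}^n$ be convex bodies such that $C_K$ is a completion of $K$, and for $\lambda\in[0,1]$ let $K_\lambda:=\lambda K+(1-\lambda)C_K$. Then for all $\lambda\in[0,1]$, \[ D(K_\lambda)=D(K)\quad\text{and}\quad w(K_\lambda)=\lambda w(K)+(1-\lambda)w(C_K). \]
   Context: A convex body is a compact convex subset of $\mathbb{R}^n$. $D(\cdot)$ denotes diameter (largest distance between two points) and $w(\cdot)$ the width (smallest distance between two distinct parallel supporting hyperplanes). $A+B=\{a+b: a\in A, b\in B\}$ is the Minkowski sum and $\lambda A=\{\lambda a: a\in A\}$. A completion of $K$ is a convex body $C_K$ with $K\subseteq C_K$ and $D(K)=D(C_K)=w(C_K)$. *)

theory Defs
  imports "HOL-Analysis.Analysis"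
begin

definition convex_body :: "'a::euclidean_space set \<Rightarrow> bool" where
  "convex_body K \<longleftrightarrow> compact K \<and> convex K \<and> K \<noteq> {}"

definition width :: "'a::euclidean_space set \<Rightarrow> real" where
  "width K = (INF u \<in> sphere 0 1. (SUP x\<in>K. u \<bullet> x) - (INF x\<in>K. u \<bullet> x))"

definition mink_comb :: "real \<Rightarrow> 'a::real_vector set \<Rightarrow> real \<Rightarrow> 'a set \<Rightarrow> 'a set" where
  "mink_comb l A m B = {l *\<^sub>R a + m *\<^sub>R b | a b. a \<in> A \<and> b \<in> B}"

definition completion :: "'a::euclidean_space set \<Rightarrow> 'a set \<Rightarrow> bool" where
  "completion K C \<longleftrightarrow> convex_body C \<and> K \<subseteq> C \<and> diameter K = diameter C \<and> diameter C = width C"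

end

theory Submission
  imports Defs
begin

lemma sup_att:
  fixes S :: "'a::euclidean_space set"
  assumes "compact S" "S \<noteq> {}"
  shows "\<exists>a\<in>S. (SUP x\<in>S. u \<bullet> x) = u \<bullet> a \<and> (\<forall>x\<in>S. u \<bullet> x \<le> u \<bullet> a)"
proof -
  have "continuous_on S (\<lambda>x. u \<bullet> x)" by (intro continuous_intros)
  then obtain a where a: "a \<in> S" "\<forall>y\<in>S. u \<bullet> y \<le> u \<bullet> a"
    using continuous_attains_sup[OF assms] by blast
  have "(SUP x\<in>S. u \<bullet> x) = u \<bullet> a"
    by (rule cSup_eq_maximum) (use a in auto)
  then show ?thesis using a by blast
qed

lemma inf_att:
  fixes S :: "'a::euclidean_space set"
  assumes "compact S" "S \<noteq> {}"
  shows "\<exists>a\<in>S. (INF x\<in>S. u \<bullet> x) = u \<bullet> a \<and> (\<forall>x\<in>S. u \<bullet> a \<le> u \<bullet> x)"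
proof -
  have "continuous_on S (\<lambda>x. u \<bullet> x)" by (intro continuous_intros)
  then obtain a where a: "a \<in> S" "\<forall>y\<in>S. u \<bullet> a \<le> u \<bullet> y"
    using continuous_attains_inf[OF assms] by blast
  have "(INF x\<in>S. u \<bullet> x) = u \<bullet> a"
    by (rule cInf_eq_minimum) (use a in auto)
  then show ?thesis using a by blast
qed

definition br :: "'a::euclidean_space set \<Rightarrow> 'a \<Rightarrow> real" where
  "br S u = (SUP x\<in>S. u \<bullet> x) - (INF x\<in>S. u \<bullet> x)"

lemma br_nonneg:
  fixes S :: "'a::euclidean_space set"
  assumes "compact S" "S \<noteq> {}"
  shows "br S u \<ge> 0"
proof -
  obtain a where a: "a\<in>S" "(SUP x\<in>S. u \<bullet> x) = u \<bullet> a" "\<forall>x\<in>S. u \<bullet> x \<le> u \<bullet> a"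
    using sup_att[OF assms] by blast
  obtain b where b: "b\<in>S" "(INF x\<in>S. u \<bullet> x) = u \<bullet> b" "\<forall>x\<in>S. u \<bullet> b \<le> u \<bullet> x"
    using inf_att[OF assms] by blast
  show ?thesis unfolding br_def using a b by force
qed

lemma br_le_diam:
  fixes S :: "'a::euclidean_space set"
  assumes "compact S" "S \<noteq> {}" "u \<in> sphere 0 1"
  shows "br S u \<le> diameter S"
proof -
  obtain a where a: "a\<in>S" "(SUP x\<in>S. u \<bullet> x) = u \<bullet> a"
    using sup_att[OF assms(1,2)] by blast
  obtain b where b: "b\<in>S" "(INF x\<in>S. u \<bullet> x) = u \<bullet> b"
    using inf_att[OF assms(1,2)] by blast
  have "u \<bullet> a - u \<bullet> b = u \<bullet> (a - b)" by (simp add: inner_diff_right)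
  also have "\<dots> \<le> norm u * norm (a - b)" by (rule norm_cauchy_schwarz)
  also have "\<dots> = dist a b" using assms(3) by (simp add: dist_norm)
  also have "\<dots> \<le> diameter S"
    using diameter_bounded_bound[OF compact_imp_bounded[OF assms(1)] a(1) b(1)] .
  finally show ?thesis unfolding br_def using a b by simp
qed

lemma sphere_ne: "\<exists>u::'a::euclidean_space. u \<in> sphere 0 1"
proof -
  obtain e :: 'a where "e \<in> Basis" using nonempty_Basis by blast
  then show ?thesis by (intro exI[of _ e]) simp
qed

lemma diam_att:
  fixes S :: "'a::euclidean_space set"
  assumes "compact S" "S \<noteq> {}"
  shows "\<exists>u\<in>sphere 0 1. br S u = diameter S"
proof -
  obtain x y where xy: "x\<in>S" "y\<in>S" "dist x y = diameter S"
    using diameter_compact_attained[OF assms(1,2)] by blast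
  show ?thesis
  proof (cases "x = y")
    case True
    obtain u :: 'a where u: "u \<in> sphere 0 1" using sphere_ne by blast
    have "diameter S = 0" using xy True by simp
    moreover have "br S u \<le> diameter S" using br_le_diam[OF assms u] .
    ultimately show ?thesis using br_nonneg[OF assms, of u] u by force
  next
    case False
    define u where "u = (1 / norm (x - y)) *\<^sub>R (x - y)"
    have nz: "norm (x - y) > 0" using False by simp
    have u: "u \<in> sphere 0 1" using nz by (simp add: u_def)
    have ux: "u \<bullet> x - u \<bullet> y = norm (x - y)"
    proof -
      have "u \<bullet> x - u \<bullet> y = u \<bullet> (x - y)" by (simp add: inner_diff_right)
      also have "\<dots> = (x - y) \<bullet> (x - y) / norm (x - y)" by (simp add: u_def)
      also have "\<dots> = norm (x - y)" using nz by (simp add: dot_square_norm power2_eq_square)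
      finally show ?thesis .
    qed
    obtain a where a: "a\<in>S" "(SUP x\<in>S. u \<bullet> x) = u \<bullet> a" "\<forall>x\<in>S. u \<bullet> x \<le> u \<bullet> a"
      using sup_att[OF assms] by blast
    obtain b where b: "b\<in>S" "(INF x\<in>S. u \<bullet> x) = u \<bullet> b" "\<forall>x\<in>S. u \<bullet> b \<le> u \<bullet> x"
      using inf_att[OF assms] by blast
    have "br S u \<ge> diameter S"
      unfolding br_def using a b xy ux by (force simp: dist_norm)
    then show ?thesis using br_le_diam[OF assms u] u by force
  qed
qed

lemma width_br: "width S = (INF u\<in>sphere 0 1. br S u)"
  unfolding width_def br_def ..

lemma mink_compact:
  fixes K C :: "'a::euclidean_space set"
  assumes "compact K" "compact C"
  shows "compact (mink_comb l K m C)"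
proof -
  have "mink_comb l K m C = (\<lambda>p. l *\<^sub>R fst p + m *\<^sub>R snd p) ` (K \<times> C)"
    unfolding mink_comb_def by force
  moreover have "continuous_on (K \<times> C) (\<lambda>p. l *\<^sub>R fst p + m *\<^sub>R snd p)"
    by (intro continuous_intros)
  ultimately show ?thesis
    using compact_continuous_image compact_Times assms by metis
qed

lemma mink_sup:
  fixes K C :: "'a::euclidean_space set"
  assumes "compact K" "K \<noteq> {}" "compact C" "C \<noteq> {}" "l \<ge> 0" "m \<ge> 0"
  shows "(SUP z\<in>mink_comb l K m C. u \<bullet> z) = l * (SUP x\<in>K. u \<bullet> x) + m * (SUP x\<in>C. u \<bullet> x)"
proof -
  obtain a where a: "a\<in>K" "(SUP x\<in>K. u \<bullet> x) = u \<bullet> a" "\<forall>x\<in>K. u \<bullet> x \<le> u \<bullet> a"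
    using sup_att[OF assms(1,2)] by blast
  obtain c where c: "c\<in>C" "(SUP x\<in>C. u \<bullet> x) = u \<bullet> c" "\<forall>x\<in>C. u \<bullet> x \<le> u \<bullet> c"
    using sup_att[OF assms(3,4)] by blast
  have "(SUP z\<in>mink_comb l K m C. u \<bullet> z) = l * (u \<bullet> a) + m * (u \<bullet> c)"
  proof (rule cSup_eq_maximum)
    have "l *\<^sub>R a + m *\<^sub>R c \<in> mink_comb l K m C" unfolding mink_comb_def using a c by blast
    then show "l * (u \<bullet> a) + m * (u \<bullet> c) \<in> (\<lambda>z. u \<bullet> z) ` mink_comb l K m C"
      by (force simp: inner_add_right)
  next
    fix t assume "t \<in> (\<lambda>z. u \<bullet> z) ` mink_comb l K m C"
    then obtain a' c' where t: "t = l * (u \<bullet> a') + m * (u \<bullet> c')" "a' \<in> K" "c' \<in> C"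
      unfolding mink_comb_def by (auto simp: inner_add_right)
    have "l * (u \<bullet> a') \<le> l * (u \<bullet> a)" using a t assms(5) by (simp add: mult_left_mono)
    moreover have "m * (u \<bullet> c') \<le> m * (u \<bullet> c)" using c t assms(6) by (simp add: mult_left_mono)
    ultimately show "t \<le> l * (u \<bullet> a) + m * (u \<bullet> c)" using t by simp
  qed
  then show ?thesis using a c by simp
qed

lemma mink_inf:
  fixes K C :: "'a::euclidean_space set"
  assumes "compact K" "K \<noteq> {}" "compact C" "C \<noteq> {}" "l \<ge> 0" "m \<ge> 0"
  shows "(INF z\<in>mink_comb l K m C. u \<bullet> z) = l * (INF x\<in>K. u \<bullet> x) + m * (INF x\<in>C. u \<bullet> x)"
proof -
  obtain a where a: "a\<in>K" "(INF x\<in>K. u \<bullet> x) = u \<bullet> a" "\<forall>x\<in>K. u \<bullet> a \<le> u \<bullet> x"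
    using inf_att[OF assms(1,2)] by blast
  obtain c where c: "c\<in>C" "(INF x\<in>C. u \<bullet> x) = u \<bullet> c" "\<forall>x\<in>C. u \<bullet> c \<le> u \<bullet> x"
    using inf_att[OF assms(3,4)] by blast
  have "(INF z\<in>mink_comb l K m C. u \<bullet> z) = l * (u \<bullet> a) + m * (u \<bullet> c)"
  proof (rule cInf_eq_minimum)
    have "l *\<^sub>R a + m *\<^sub>R c \<in> mink_comb l K m C" unfolding mink_comb_def using a c by blast
    then show "l * (u \<bullet> a) + m * (u \<bullet> c) \<in> (\<lambda>z. u \<bullet> z) ` mink_comb l K m C"
      by (force simp: inner_add_right)
  next
    fix t assume "t \<in> (\<lambda>z. u \<bullet> z) ` mink_comb l K m C"
    then obtain a' c' where t: "t = l * (u \<bullet> a') + m * (u \<bullet> c')" "a' \<in> K" "c' \<in> C"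
      unfolding mink_comb_def by (auto simp: inner_add_right)
    have "l * (u \<bullet> a) \<le> l * (u \<bullet> a')" using a t assms(5) by (simp add: mult_left_mono)
    moreover have "m * (u \<bullet> c) \<le> m * (u \<bullet> c')" using c t assms(6) by (simp add: mult_left_mono)
    ultimately show "l * (u \<bullet> a) + m * (u \<bullet> c) \<le> t" using t by simp
  qed
  then show ?thesis using a c by simp
qed

lemma mink_br:
  fixes K C :: "'a::euclidean_space set"
  assumes "compact K" "K \<noteq> {}" "compact C" "C \<noteq> {}" "l \<ge> 0" "m \<ge> 0"
  shows "br (mink_comb l K m C) u = l * br K u + m * br C u"
  unfolding br_def mink_sup[OF assms] mink_inf[OF assms] by (simp add: algebra_simps)

theorem lemma2p2:
  fixes K CK :: "'a::euclidean_space set" and l :: real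
  assumes "convex_body K" and "convex_body CK" and "completion K CK"
    and "0 \<le> l" and "l \<le> 1"
  shows "diameter (mink_comb l K (1 - l) CK) = diameter K
    \<and> width (mink_comb l K (1 - l) CK) = l * width K + (1 - l) * width CK"
proof -
  have K: "compact K" "K \<noteq> {}" using assms(1) by (auto simp: convex_body_def)
  have C: "compact CK" "CK \<noteq> {}" using assms(2) by (auto simp: convex_body_def)
  define D where "D = diameter CK"
  have DK: "diameter K = D" and wC: "width CK = D"
    using assms(3) by (auto simp: completion_def D_def)
  have m: "1 - l \<ge> 0" using assms(5) by simp
  define M where "M = mink_comb l K (1 - l) CK"
  have M: "compact M" "M \<noteq> {}"
    using mink_compact[OF K(1) C(1)] K C unfolding M_def mink_comb_def by auto
  have bdd: "bdd_below (br S ` sphere 0 1)" if "compact S" "S \<noteq> {}" for S :: "'a set"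
    using br_nonneg[OF that] by (intro bdd_belowI[of _ 0]) auto
  have brC: "br CK u = D" if "u \<in> sphere 0 1" for u
  proof -
    have "br CK u \<le> D" using br_le_diam[OF C that] D_def by simp
    moreover have "width CK \<le> br CK u"
      unfolding width_br by (rule cINF_lower[OF bdd[OF C] that])
    ultimately show ?thesis using wC by simp
  qed
  have brM: "br M u = l * br K u + (1 - l) * D" if "u \<in> sphere 0 1" for u
    unfolding M_def mink_br[OF K C assms(4) m] brC[OF that] ..
  have sne: "sphere (0::'a) 1 \<noteq> {}" using sphere_ne by blast
  have diam: "diameter M = D"
  proof -
    obtain u where u: "u \<in> sphere 0 1" "br M u = diameter M" using diam_att[OF M] by blast
    obtain v where v: "v \<in> sphere 0 1" "br K v = diameter K" using diam_att[OF K] by blast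
    have "br K u \<le> D" using br_le_diam[OF K u(1)] DK by simp
    then have "l * br K u \<le> l * D" using assms(4) by (rule mult_left_mono)
    then have "diameter M \<le> D" using u brM[OF u(1)] by (simp add: algebra_simps)
    moreover have "diameter M \<ge> D"
      using br_le_diam[OF M v(1)] brM[OF v(1)] v DK by (simp add: algebra_simps)
    ultimately show ?thesis by simp
  qed
  have wid: "width M = l * width K + (1 - l) * D"
  proof (rule antisym)
    show "l * width K + (1 - l) * D \<le> width M"
      unfolding width_br
    proof (rule cINF_greatest[OF sne])
      fix u :: 'a assume u: "u \<in> sphere 0 1"
      have "width K \<le> br K u" unfolding width_br by (rule cINF_lower[OF bdd[OF K] u])
      then show "l * (INF u\<in>sphere 0 1. br K u) + (1 - l) * D \<le> br M u"
        using brM[OF u] assms(4) unfolding width_br by (simp add: mult_left_mono)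
    qed
  next
    show "width M \<le> l * width K + (1 - l) * D"
    proof (rule field_le_epsilon)
      fix e :: real assume e: "0 < e"
      have lt: "(INF u\<in>sphere 0 1. br K u) < width K + e" unfolding width_br using e by simp
      have "\<exists>u\<in>sphere 0 1. br K u < width K + e"
        using lt cInf_less_iff[of "br K ` sphere 0 1" "width K + e"] sne bdd[OF K] unfolding width_br by blast
      then obtain u where u: "u \<in> sphere 0 1" "br K u < width K + e" by blast
      have "width M \<le> br M u" unfolding width_br by (rule cINF_lower[OF bdd[OF M] u(1)])
      also have "\<dots> = l * br K u + (1 - l) * D" by (rule brM[OF u(1)])
      also have "\<dots> \<le> l * (width K + e) + (1 - l) * D"
        using u(2) assms(4) by (simp add: mult_left_mono)
      also have "\<dots> \<le> l * width K + (1 - l) * D + e"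
        using assms(5) e by (simp add: algebra_simps mult_left_le_one_le)
      finally show "width M \<le> l * width K + (1 - l) * D + e" .
    qed
  qed
  show ?thesis using diam wid DK wC unfolding M_def by simp
qed

end
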